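(* For all integers $0\le k\le n$, \[ B^{\mathrm{fmaj}}_{n,n-k}(q)=\sum_{\ell=0}^{k}q^{(n-k)(2\ell-n-k)}\,B_{n,n-\ell}(q)\,{n-\ell\brack k-\ell}_{q^2}. \]
   Context: $\mathcal{B}_n$ is the group of signed permutations of $[n]$ (bijections $\pi$ of $\{\pm1,\dots,\pm n\}$ with $\pi(-i)=-\pi(i)$, written $\pi=\pi_1\cdots\pi_n$), integers ordered naturally. Set $\pi_0=0$; $\mathrm{Des}_B(\pi)=\{i\in\{0,\dots,n-1\}:\pi_i>\pi_{i+1}\}$, $\mathrm{des}_B(\pi)=|\mathrm{Des}_B(\pi)|$, $\mathrm{neg}(\pi)=|\{i\in[n]:\pi_i<0\}|$, $\mathrm{fmaj}(\pi)=\sum_{i\in\mathrm{Des}_B(\pi)}2i+\mathrm{neg}(\pi)$; $B_{n,k}(q)$ is defined by $\sum_{\pi\in\mathcal{B}_n}t^{\mathrm{des}_B(\pi)}q^{\mathrm{fmaj}(\pi)}=\sum_kB_{n,k}(q)t^k$. For $0\le k\le n$ let $\mathcal{B}^{>}_{n,k}=\{(\pi,S):\pi\in\mathcal{B}_n,\ S\subseteq\mathrm{Des}_B(\pi),\ |S|=k\}$ (descent-starred signed permutations; elements of $S$ are the starred descents). For $(\pi,S)\in\mathcal{B}^{>}_{n,k}$ define $\mathrm{fmaj}((\pi,S))=\mathrm{fmaj}(\pi)-\sum_{j\in S}\bigl(2|\mathrm{Des}_B(\pi)\cap\{j,\dots,n-1\}|-1\bigr)$, and $B^{\mathrm{fmaj}}_{n,k}(q)=\sum_{(\pi,S)\in\mathcal{B}^{>}_{n,k}}q^{\mathrm{fmaj}((\pi,S))}$.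 $[k]_q=1+\dots+q^{k-1}$, $[n]_q!=\prod_{i=1}^n[i]_q$, ${n\brack k}_q=\frac{[n]_q!}{[k]_q![n-k]_q!}$, and the subscript $q^2$ means $q$ is replaced by $q^2$. *)

theory Defs
  imports Complex_Main
begin

text \<open>A signed permutation pi = pi_1 ... pi_n of [n] is encoded as a function
  pi :: nat => int with pi i the i-th letter for 1 <= i <= n, and pi i = 0 otherwise
  (in particular pi 0 = 0, matching the convention pi_0 = 0). The condition
  pi(-i) = -pi(i) is built into this one-line notation; the requirement is that
  i |-> |pi i| is a bijection of {1..n}.\<close>

definition signed_perms :: "nat \<Rightarrow> (nat \<Rightarrow> int) set" where
  "signed_perms n = {p. (\<forall>i. i \<notin> {1..n} \<longrightarrow> p i = 0) \<and>
                        bij_betw (\<lambda>i. nat \<bar>p i\<bar>) {1..n} {1..n}}"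

definition DesB :: "nat \<Rightarrow> (nat \<Rightarrow> int) \<Rightarrow> nat set" where
  "DesB n p = {i \<in> {0..<n}. p i > p (Suc i)}"

definition desB :: "nat \<Rightarrow> (nat \<Rightarrow> int) \<Rightarrow> nat" where
  "desB n p = card (DesB n p)"

definition negB :: "nat \<Rightarrow> (nat \<Rightarrow> int) \<Rightarrow> nat" where
  "negB n p = card {i \<in> {1..n}. p i < 0}"

definition fmaj :: "nat \<Rightarrow> (nat \<Rightarrow> int) \<Rightarrow> nat" where
  "fmaj n p = (\<Sum>i\<in>DesB n p. 2 * i) + negB n p"

definition Bpoly :: "nat \<Rightarrow> nat \<Rightarrow> real \<Rightarrow> real" where
  "Bpoly n k q = (\<Sum>p\<in>{p \<in> signed_perms n. desB n p = k}. q ^ fmaj n p)"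

definition starred :: "nat \<Rightarrow> nat \<Rightarrow> ((nat \<Rightarrow> int) \<times> nat set) set" where
  "starred n k = {(p, S). p \<in> signed_perms n \<and> S \<subseteq> DesB n p \<and> card S = k}"

definition fmaj_star :: "nat \<Rightarrow> (nat \<Rightarrow> int) \<Rightarrow> nat set \<Rightarrow> int" where
  "fmaj_star n p S = int (fmaj n p)
     - (\<Sum>j\<in>S. 2 * int (card (DesB n p \<inter> {j..n - 1})) - 1)"

definition Bfmaj :: "nat \<Rightarrow> nat \<Rightarrow> real \<Rightarrow> real" where
  "Bfmaj n k q = (\<Sum>(p, S)\<in>starred n k. q powi fmaj_star n p S)"

definition qint :: "nat \<Rightarrow> real \<Rightarrow> real" where
  "qint k q = (\<Sum>i<k. q ^ i)"

definition qfact :: "nat \<Rightarrow> real \<Rightarrow> real" where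
  "qfact n q = (\<Prod>i=1..n. qint i q)"

definition qbinom :: "nat \<Rightarrow> nat \<Rightarrow> real \<Rightarrow> real" where
  "qbinom n k q = qfact n q / (qfact k q * qfact (n - k) q)"

end

theory Submission
  imports Defs
begin

lemma qint_Suc: "qint (Suc i) x = qint i x + x ^ i"
  by (simp add: qint_def)

lemma qint_add: "qint (a + b) x = qint a x + x ^ a * qint b x"
  by (induction b) (simp_all add: qint_def power_add algebra_simps)

lemma qint_pos: "x > 0 \<Longrightarrow> i \<ge> 1 \<Longrightarrow> qint i (x::real) > 0"
proof (induction i)
  case (Suc i) then show ?case by (cases "i = 0") (auto simp: qint_Suc qint_def intro!: add_nonneg_pos sum_nonneg)
qed simp

lemma qfact_Suc: "qfact (Suc n) x = qfact n x * qint (Suc n) x"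
  by (simp add: qfact_def prod.cl_ivl_Suc)

lemma qfact_0: "qfact 0 x = 1" by (simp add: qfact_def)

lemma qfact_pos: "x > 0 \<Longrightarrow> qfact n (x::real) > 0"
  by (induction n) (auto simp: qfact_0 qfact_Suc qint_pos)

lemma qbinom_0: "x > 0 \<Longrightarrow> qbinom d 0 x = 1"
  using qfact_pos[of x d] by (simp add: qbinom_def qfact_0)

lemma qbinom_self: "x > 0 \<Longrightarrow> qbinom d d x = 1"
  using qfact_pos[of x d] by (simp add: qbinom_def qfact_0)

lemma qbinom_sym: "m \<le> d \<Longrightarrow> qbinom d (d - m) x = qbinom d m x"
  by (simp add: qbinom_def mult.commute)

lemma qbinom_pascal:
  assumes x: "x > 0" and md: "m < d"
  shows "qbinom (Suc d) (Suc m) x = x ^ Suc m * qbinom d (Suc m) x + qbinom d m x"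
proof -
  obtain e where d: "d = m + Suc e" using md by (metis less_imp_Suc_add add_Suc_right)
  have e1: "Suc d - Suc m = Suc e" "d - Suc m = e" "d - m = Suc e" using d by auto
  have p: "qfact m x > 0" "qfact e x > 0" "qfact d x > 0" "qint (Suc m) x > 0" "qint (Suc e) x > 0"
    using qfact_pos qint_pos x by auto
  have key: "qint (Suc d) x = x ^ Suc m * qint (Suc e) x + qint (Suc m) x"
    using qint_add[of "Suc m" "Suc e" x] d by simp
  show ?thesis
    unfolding qbinom_def e1 qfact_Suc using p
    by (simp add: field_simps key)
qed


lemma subsets_insert_sum:
  fixes w :: "'a \<Rightarrow> real"
  assumes fin: "finite A" and a: "a \<notin> A"
  shows "(\<Sum>T\<in>{T. T \<subseteq> insert a A \<and> card T = Suc m}. prod w T)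
       = (\<Sum>T\<in>{T. T \<subseteq> A \<and> card T = Suc m}. prod w T)
         + w a * (\<Sum>T\<in>{T. T \<subseteq> A \<and> card T = m}. prod w T)"
proof -
  have eq: "{T. T \<subseteq> insert a A \<and> card T = Suc m}
      = {T. T \<subseteq> A \<and> card T = Suc m} \<union> insert a ` {T. T \<subseteq> A \<and> card T = m}"
  proof (intro equalityI subsetI)
    fix T assume T: "T \<in> {T. T \<subseteq> insert a A \<and> card T = Suc m}"
    show "T \<in> {T. T \<subseteq> A \<and> card T = Suc m} \<union> insert a ` {T. T \<subseteq> A \<and> card T = m}"
    proof (cases "a \<in> T")
      case True
      have "T = insert a (T - {a})" using True by auto
      moreover have "T - {a} \<subseteq> A" "card (T - {a}) = m"
        using T True finite_subset[OF _ finite_insert[THEN iffD2, OF fin]] by (auto simp: card_Diff_singleton)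
      ultimately show ?thesis by blast
    next
      case False then show ?thesis using T by auto
    qed
  next
    fix T assume "T \<in> {T. T \<subseteq> A \<and> card T = Suc m} \<union> insert a ` {T. T \<subseteq> A \<and> card T = m}"
    then show "T \<in> {T. T \<subseteq> insert a A \<and> card T = Suc m}"
      using a fin by auto (metis card_insert_disjoint finite_subset subsetD)
  qed
  have f1: "finite {T. T \<subseteq> A \<and> card T = k}" for k
    by (intro finite_Collect_conjI disjI1 finite_Collect_subsets fin)
  have disj: "{T. T \<subseteq> A \<and> card T = Suc m} \<inter> insert a ` {T. T \<subseteq> A \<and> card T = m} = {}"
    using a by auto
  have inj: "inj_on (insert a) {T. T \<subseteq> A \<and> card T = m}"
    using a by (auto simp: inj_on_def)
  have "(\<Sum>T\<in>insert a ` {T. T \<subseteq> A \<and> card T = m}. prod w T)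
      = (\<Sum>T\<in>{T. T \<subseteq> A \<and> card T = m}. prod w (insert a T))"
    by (rule sum.reindex[OF inj, unfolded comp_def])
  also have "\<dots> = (\<Sum>T\<in>{T. T \<subseteq> A \<and> card T = m}. w a * prod w T)"
    using a fin by (intro sum.cong refl) (metis (mono_tags) mem_Collect_eq prod.insert finite_subset subsetD)
  finally show ?thesis
    unfolding eq using f1 disj by (simp add: sum.union_disjoint sum_distrib_left)
qed

definition G :: "real \<Rightarrow> nat \<Rightarrow> nat \<Rightarrow> real" where
  "G q d m = (\<Sum>T\<in>{T. T \<subseteq> {1..d} \<and> card T = m}. \<Prod>t\<in>T. q powi (1 - 2 * int t))"

lemma G_Suc_Suc: "G q (Suc d) (Suc m) = G q d (Suc m) + q powi (1 - 2 * int (Suc d)) * G q d m"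
  unfolding G_def using subsets_insert_sum[of "{1..d}" "Suc d" "\<lambda>t. q powi (1 - 2 * int t)" m]
  by (simp add: atLeastAtMostSuc_conv)

lemma G_0: "G q d 0 = 1"
proof -
  have "{T. T \<subseteq> {1..d} \<and> card T = 0} = {{}}" by (auto dest: finite_subset)
  then show ?thesis by (simp add: G_def)
qed

lemma G_zero_Suc: "G q 0 (Suc m) = 0"
proof -
  have "{T. T \<subseteq> {1..(0::nat)} \<and> card T = Suc m} = {}" by auto
  then show ?thesis by (simp add: G_def)
qed

lemma powi_comb: "(q::real) \<noteq> 0 \<Longrightarrow> a + b = c \<Longrightarrow> q powi a * q powi b = q powi c"
  by (metis power_int_add)

lemma G_formula:
  assumes q: "q \<noteq> 0"
  shows "G q d m = (if m \<le> d then q powi (int m * (int m - 2 * int d)) * qbinom d m (q\<^sup>2) else 0)"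
proof (induction d arbitrary: m)
  case 0
  then show ?case using q by (cases m) (auto simp: G_0 G_zero_Suc qbinom_0)
next
  case (Suc d)
  have x: "q\<^sup>2 > 0" using q by simp
  show ?case
  proof (cases m)
    case 0 then show ?thesis using x by (simp add: G_0 qbinom_0)
  next
    case (Suc m')
    consider "m' < d" | "m' = d" | "m' > d" by linarith
    then show ?thesis
    proof cases
      case 1
      have e1: "q powi (int (Suc m') * (int (Suc m') - 2 * int (Suc d))) * (q\<^sup>2) ^ Suc m'
           = q powi (int (Suc m') * (int (Suc m') - 2 * int d))"
      proof -
        have "(q\<^sup>2) ^ Suc m' = q powi (int (2 * Suc m'))"
          by (simp only: power_int_of_nat power_mult)
        then show ?thesis using q by (simp only:) (intro powi_comb, simp_all add: algebra_simps)
      qed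
      have e2: "q powi (int (Suc m') * (int (Suc m') - 2 * int (Suc d)))
           = q powi (1 - 2 * int (Suc d)) * q powi (int m' * (int m' - 2 * int d))"
        using q by (intro powi_comb[symmetric]) (simp_all add: algebra_simps)
      have "G q (Suc d) m = G q d (Suc m') + q powi (1 - 2 * int (Suc d)) * G q d m'"
        using Suc by (simp add: G_Suc_Suc)
      also have "\<dots> = q powi (int (Suc m') * (int (Suc m') - 2 * int d)) * qbinom d (Suc m') (q\<^sup>2)
          + q powi (1 - 2 * int (Suc d)) * (q powi (int m' * (int m' - 2 * int d)) * qbinom d m' (q\<^sup>2))"
        using 1 by (simp add: Suc.IH)
      also have "\<dots> = q powi (int (Suc m') * (int (Suc m') - 2 * int (Suc d))) * 
          ((q\<^sup>2) ^ Suc m' * qbinom d (Suc m') (q\<^sup>2) + qbinom d m' (q\<^sup>2))"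
        by (simp only: distrib_left mult.assoc[symmetric] e1, simp only: e2 mult.assoc)
      also have "\<dots> = q powi (int m * (int m - 2 * int (Suc d))) * qbinom (Suc d) m (q\<^sup>2)"
        using Suc 1 by (simp add: qbinom_pascal[OF x])
      finally show ?thesis using Suc 1 by simp
    next
      case 2
      have e2: "q powi (int (Suc d) * (int (Suc d) - 2 * int (Suc d)))
           = q powi (1 - 2 * int (Suc d)) * q powi (int d * (int d - 2 * int d))"
        using q by (intro powi_comb[symmetric]) (simp_all add: algebra_simps)
      have "G q (Suc d) (Suc d) = q powi (1 - 2 * int (Suc d)) * q powi (int d * (int d - 2 * int d))"
        using x by (simp add: G_Suc_Suc Suc.IH qbinom_self)
      then show ?thesis unfolding Suc 2 using qbinom_self[OF x, of "Suc d"]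
        by (simp only: e2[symmetric] le_refl if_True mult_1_right)
    next
      case 3
      then show ?thesis using Suc by (simp add: G_Suc_Suc Suc.IH)
    qed
  qed
qed


lemma finite_signed_perms: "finite (signed_perms n)"
proof -
  have "signed_perms n \<subseteq> {f. \<forall>x. (x \<in> {1..n} \<longrightarrow> f x \<in> {-int n..int n}) \<and> (x \<notin> {1..n} \<longrightarrow> f x = 0)}"
  proof safe
    fix p x assume p: "p \<in> signed_perms n" and x: "x \<in> {1..n}"
    then have "nat \<bar>p x\<bar> \<in> {1..n}" unfolding signed_perms_def using bij_betwE by blast
    then show "p x \<in> {-int n..int n}" by auto
  next
    fix p x assume "p \<in> signed_perms n" "x \<notin> {1..n}"
    then show "p x = 0" unfolding signed_perms_def by auto
  qed
  then show ?thesis by (rule finite_subset) (intro finite_set_of_finite_funs, auto)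
qed

lemma DesB_sub: "DesB n p \<subseteq> {0..<n}"
  by (auto simp: DesB_def)

lemma desB_le: "desB n p \<le> n"
  unfolding desB_def using card_mono[OF _ DesB_sub, of n p] by simp

lemma rank_bij:
  fixes D :: "nat set"
  assumes D: "D \<subseteq> {0..<n}"
  shows "bij_betw (\<lambda>j. card (D \<inter> {j..n-1})) D {1..card D}"
proof -
  have fD: "finite D" using D by (rule finite_subset) simp
  let ?r = "\<lambda>j. card (D \<inter> {j..n-1})"
  have img: "?r j \<in> {1..card D}" if j: "j \<in> D" for j
  proof -
    have "j < n" using j D by (meson atLeastLessThan_iff subsetD)
    then have jn: "j \<le> n - 1" by linarith
    have jin: "j \<in> D \<inter> {j..n-1}" using j jn by simp
    have fin: "finite (D \<inter> {j..n-1})" using fD by (rule finite_Int[OF disjI1])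
    have "card (D \<inter> {j..n-1}) \<noteq> 0" using fin jin by (metis card_0_eq empty_iff)
    moreover have "card (D \<inter> {j..n-1}) \<le> card D" using fD by (rule card_mono) (rule Int_lower1)
    ultimately show ?thesis by (simp del: card_0_eq)
  qed
  have inj: "inj_on ?r D"
  proof (rule linorder_inj_onI')
    fix a b assume ab': "a \<in> D" "b \<in> D" "a < b"
    then have ab: "a < b" "a \<in> D" "b \<in> D" by simp_all
    have "b < n" using ab D by (meson atLeastLessThan_iff subsetD)
    then have bn: "b \<le> n - 1" by linarith
    have sub: "D \<inter> {b..n-1} \<subseteq> D \<inter> {a..n-1}" using ab by auto
    have "a \<in> D \<inter> {a..n-1}" "a \<notin> D \<inter> {b..n-1}" using ab bn by auto
    then have ne: "D \<inter> {b..n-1} \<noteq> D \<inter> {a..n-1}" by metis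
    have "D \<inter> {b..n-1} \<subset> D \<inter> {a..n-1}" using sub ne by (rule psubsetI)
    then have "?r b < ?r a" using fD by (intro psubset_card_mono) auto
    then show "?r a \<noteq> ?r b" by simp
  qed
  have "card (?r ` D) = card {1..card D}" using card_image[OF inj] by simp
  moreover have "?r ` D \<subseteq> {1..card D}" using img by blast
  ultimately have "?r ` D = {1..card D}" by (intro card_subset_eq) auto
  then show ?thesis using inj by (simp add: bij_betw_def)
qed
lemma sum_subsets_bij:
  fixes w :: "'b \<Rightarrow> real"
  assumes f: "bij_betw f A B"
  shows "(\<Sum>S\<in>{S. S \<subseteq> A \<and> card S = m}. \<Prod>j\<in>S. w (f j)) = (\<Sum>T\<in>{T. T \<subseteq> B \<and> card T = m}. prod w T)"
proof (rule sum.reindex_cong[symmetric])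
  have inj: "inj_on f A" and fAB: "f ` A = B" using f by (simp_all add: bij_betw_def)
  show "inj_on (image f) {S. S \<subseteq> A \<and> card S = m}"
    using inj_on_image_Pow[OF inj] by (rule inj_on_subset) blast
  show "{T. T \<subseteq> B \<and> card T = m} = image f ` {S. S \<subseteq> A \<and> card S = m}"
  proof (intro equalityI subsetI)
    fix T assume T: "T \<in> {T. T \<subseteq> B \<and> card T = m}"
    then have TB: "T \<subseteq> B" and cT: "card T = m" by simp_all
    let ?S = "inv_into A f ` T"
    have "f ` ?S = T"
    proof -
      have "f ` ?S = (\<lambda>y. f (inv_into A f y)) ` T" by (simp add: image_image)
      also have "\<dots> = (\<lambda>y. y) ` T"
        by (rule image_cong[OF refl]) (metis TB fAB f_inv_into_f subsetD)
      finally show ?thesis by simp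
    qed
    moreover have SA: "?S \<subseteq> A"
    proof
      fix x assume "x \<in> ?S"
      then obtain y where "y \<in> T" "x = inv_into A f y" by blast
      then show "x \<in> A" using TB fAB by (metis inv_into_into subsetD)
    qed
    moreover have "card ?S = m"
    proof -
      have "inj_on f ?S" using inj SA by (rule inj_on_subset)
      then have "card (f ` ?S) = card ?S" by (rule card_image)
      then show ?thesis using \<open>f ` ?S = T\<close> cT by simp
    qed
    ultimately show "T \<in> image f ` {S. S \<subseteq> A \<and> card S = m}" by blast
  next
    fix T assume "T \<in> image f ` {S. S \<subseteq> A \<and> card S = m}"
    then obtain S where S: "S \<subseteq> A" "card S = m" "T = f ` S" by blast
    have "card (f ` S) = card S" using inj_on_subset[OF inj S(1)] by (rule card_image)
    moreover have "f ` S \<subseteq> B" using S(1) fAB by blast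
    ultimately show "T \<in> {T. T \<subseteq> B \<and> card T = m}" using S by simp
  qed
  fix S assume "S \<in> {S. S \<subseteq> A \<and> card S = m}"
  then have "inj_on f S" using inj by (blast intro: inj_on_subset)
  then show "prod w (f ` S) = (\<Prod>j\<in>S. w (f j))"
    by (simp add: prod.reindex)
qed
lemma powi_sum_diff:
  assumes q: "(q::real) \<noteq> 0" and S: "finite S"
  shows "q powi (a - sum f S) = q powi a * (\<Prod>j\<in>S. q powi (- f j))"
  using S
proof (induction S rule: finite_induct)
  case (insert x S)
  have "q powi (a - sum f (insert x S)) = q powi (a - sum f S) * q powi (- f x)"
    using insert q by (intro powi_comb[symmetric]) auto
  then show ?case using insert by (simp add: mult_ac)
qed simp


theorem proposition2p4:
  fixes n k :: nat and q :: real
  assumes "k \<le> n" and "q \<noteq> 0"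
  shows "Bfmaj n (n - k) q =
    (\<Sum>l=0..k. q powi (int (n - k) * (2 * int l - int n - int k))
                 * Bpoly n (n - l) q * qbinom (n - l) (k - l) (q\<^sup>2))"
proof -
  note kn = assms(1) and q = assms(2)
  define m where "m = n - k"
  have x: "q\<^sup>2 > 0" using q by simp
  have finD: "finite (DesB n p)" for p
    using DesB_sub by (rule finite_subset) simp
  have fin2: "finite {S. S \<subseteq> DesB n p \<and> card S = m}" for p
    by (intro finite_Collect_conjI disjI1 finite_Collect_subsets finD)
  have L: "Bfmaj n m q = (\<Sum>p\<in>signed_perms n. q ^ fmaj n p * G q (desB n p) m)"
  proof -
    have st: "starred n m = Sigma (signed_perms n) (\<lambda>p. {S. S \<subseteq> DesB n p \<and> card S = m})"
      by (auto simp: starred_def)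
    have inner: "(\<Sum>S\<in>{S. S \<subseteq> DesB n p \<and> card S = m}. q powi fmaj_star n p S)
        = q ^ fmaj n p * G q (desB n p) m" for p
    proof -
      let ?D = "DesB n p"
      let ?r = "\<lambda>j. card (?D \<inter> {j..n-1})"
      have "q powi fmaj_star n p S = q ^ fmaj n p * (\<Prod>j\<in>S. q powi (1 - 2 * int (?r j)))"
        if S: "S \<in> {S. S \<subseteq> DesB n p \<and> card S = m}" for S
      proof -
        have fS: "finite S" using S finD finite_subset by blast
        have "q powi fmaj_star n p S = q powi int (fmaj n p) * (\<Prod>j\<in>S. q powi (- (2 * int (?r j) - 1)))"
          unfolding fmaj_star_def by (rule powi_sum_diff[OF q fS])
        then show ?thesis by simp
      qed
      then have "(\<Sum>S\<in>{S. S \<subseteq> DesB n p \<and> card S = m}. q powi fmaj_star n p S)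
          = q ^ fmaj n p * (\<Sum>S\<in>{S. S \<subseteq> DesB n p \<and> card S = m}. \<Prod>j\<in>S. q powi (1 - 2 * int (?r j)))"
        by (simp add: sum_distrib_left)
      also have "(\<Sum>S\<in>{S. S \<subseteq> DesB n p \<and> card S = m}. \<Prod>j\<in>S. q powi (1 - 2 * int (?r j)))
          = G q (desB n p) m"
        unfolding G_def desB_def
        by (rule sum_subsets_bij[OF rank_bij[OF DesB_sub], of "\<lambda>t. q powi (1 - 2 * int t)"])
      finally show ?thesis .
    qed
    have "Bfmaj n m q = (\<Sum>p\<in>signed_perms n. \<Sum>S\<in>{S. S \<subseteq> DesB n p \<and> card S = m}. q powi fmaj_star n p S)"
      unfolding Bfmaj_def st using finite_signed_perms fin2
      by (subst sum.Sigma) auto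
    then show ?thesis using inner by simp
  qed
  define c where "c l = q powi (int (n - k) * (2 * int l - int n - int k)) * qbinom (n - l) (k - l) (q\<^sup>2)" for l
  have "(\<Sum>l=0..k. q powi (int (n - k) * (2 * int l - int n - int k))
                 * Bpoly n (n - l) q * qbinom (n - l) (k - l) (q\<^sup>2))
      = (\<Sum>l=0..k. \<Sum>p\<in>signed_perms n. if desB n p = n - l then q ^ fmaj n p * c l else 0)"
  proof (rule sum.cong[OF refl])
    fix l
    have "Bpoly n (n - l) q = (\<Sum>p\<in>signed_perms n. if desB n p = n - l then q ^ fmaj n p else 0)"
      unfolding Bpoly_def using finite_signed_perms by (rule sum.inter_filter)
    then show "q powi (int (n - k) * (2 * int l - int n - int k)) * Bpoly n (n - l) q * qbinom (n - l) (k - l) (q\<^sup>2)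
      = (\<Sum>p\<in>signed_perms n. if desB n p = n - l then q ^ fmaj n p * c l else 0)"
      by (simp only: sum_distrib_left sum_distrib_right) (intro sum.cong refl, simp add: c_def mult_ac)
  qed
  also have "\<dots> = (\<Sum>p\<in>signed_perms n. \<Sum>l=0..k. if desB n p = n - l then q ^ fmaj n p * c l else 0)"
    by (rule sum.swap)
  also have "\<dots> = (\<Sum>p\<in>signed_perms n. q ^ fmaj n p * G q (desB n p) m)"
  proof (rule sum.cong[OF refl])
    fix p
    define d where "d = desB n p"
    have dn: "d \<le> n" unfolding d_def by (rule desB_le)
    have "(\<Sum>l=0..k. if desB n p = n - l then q ^ fmaj n p * c l else 0)
        = (\<Sum>l=0..k. if l = n - d then q ^ fmaj n p * c l else 0)"
      using kn dn unfolding d_def by (intro sum.cong refl) auto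
    also have "\<dots> = (if n - d \<in> {0..k} then q ^ fmaj n p * c (n - d) else 0)"
      by (rule sum.delta[OF finite_atLeastAtMost])
    also have "\<dots> = q ^ fmaj n p * G q d m"
    proof (cases "m \<le> d")
      case True
      have e: "int (n - k) * (2 * int (n - d) - int n - int k) = int m * (int m - 2 * int d)"
        using kn dn True unfolding m_def by (simp add: of_nat_diff algebra_simps)
      have b: "qbinom (n - (n - d)) (k - (n - d)) (q\<^sup>2) = qbinom d m (q\<^sup>2)"
      proof -
        have "n - (n - d) = d" "k - (n - d) = d - m" using kn dn True unfolding m_def by auto
        then show ?thesis using True qbinom_sym[of m d "q\<^sup>2"] by simp
      qed
      show ?thesis using True kn dn unfolding c_def e b G_formula[OF q] m_def by auto
    next
      case False
      then show ?thesis using kn dn unfolding G_formula[OF q] m_def by auto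
    qed
    finally show "(\<Sum>l=0..k. if desB n p = n - l then q ^ fmaj n p * c l else 0)
        = q ^ fmaj n p * G q (desB n p) m" unfolding d_def .
  qed
  finally show ?thesis using L unfolding m_def by simp
qed
end
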